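(* Let $\mathcal{D}=\{(\mathbf{p}_n,\mathbf{q}_n)\}_{n=1}^N$ be data with $\mathbf{p}_n\in\mathbb{R}_{++}^K$, $\mathbf{q}_n\in\mathbb{R}_+^K$, whose associated graph $G$ satisfies the Cycle Edge Weight Equality Condition (CEWEC), and let $\mathcal{D}'$ consist of $\mathcal{D}$ together with at least one additional observation $(\mathbf{p},\mathbf{q})\in\mathbb{R}_{++}^K\times\mathbb{R}_+^K$, with associated graph $G'$. If $G'$ also satisfies the CEWEC, then for every price vector $\mathbf{p}\in\mathbb{R}_{++}^K$ and every vertex $\upsilon$ of $G$, $$M^-_{G'}(\mathbf{p},\upsilon)\ge M^-_G(\mathbf{p},\upsilon)\quad\text{and}\quad M^+_{G'}(\mathbf{p},\upsilon)\le M^+_G(\mathbf{p},\upsilon).$$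
   Context: For a dataset $\{(\mathbf{p}_n,\mathbf{q}_n)\}$, its associated graph $H$ is the weighted directed graph with one vertex $\upsilon_n$ per observation, an edge from $\upsilon_m$ to $\upsilon_n$ for each $m\ne n$, with weight $w(\upsilon_m,\upsilon_n)=\frac{\mathbf{p}_m\cdot\mathbf{q}_n}{\mathbf{p}_m\cdot\mathbf{q}_m}$. $H$ satisfies the CEWEC if for every cycle in $H$ all of whose edge weights are $\le 1$, all of its edge weights equal $1$. A walk $\upsilon_{a_0},\dots,\upsilon_{a_k}$ ($k\ge0$) in $H$ is an RP-walk if every edge weight along it is $\le 1$; write $uRv$ if there is an RP-walk from $u$ to $v$ in $H$. Set $\operatorname{VRP}_H(\upsilon)=\{l:\upsilon_l R\,\upsilon\}$ and $\operatorname{VRW}_H(\upsilon)=\{l:\upsilon R\,\upsilon_l\}$, and define $M^-_H(\mathbf{p},\upsilon)=\inf_{\mathbf{q}\in\mathbb{R}_+^K}\{\mathbf{p}\cdot\mathbf{q}:\mathbf{p}_l\cdot\mathbf{q}\ge\mathbf{p}_l\cdot\mathbf{q}_l \text{ for all } l\in\operatorname{VRW}_H(\upsilon)\}$ and $M^+_H(\mathbf{p},\upsilon)=\min\{\mathbf{p}\cdot\mathbf{q}_l: l\in\operatorname{VRP}_H(\upsilon)\}$. *)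

theory Defs
  imports "HOL-Analysis.Analysis"
begin

text \<open>A dataset is given by a number of observations N and functions
  P, Q :: nat => real^'k; observation n (for n < N) is (P n, Q n).
  The vertices of the associated graph are the indices 0..<N.\<close>

definition edge_weight :: "(nat \<Rightarrow> real^'k) \<Rightarrow> (nat \<Rightarrow> real^'k) \<Rightarrow> nat \<Rightarrow> nat \<Rightarrow> real" where
  "edge_weight P Q m n = (P m \<bullet> Q n) / (P m \<bullet> Q m)"

text \<open>A (directed, simple) cycle: a list of k >= 2 distinct vertices,
  with edges xs!i -> xs!((i+1) mod k).\<close>
definition is_cycle :: "nat \<Rightarrow> nat list \<Rightarrow> bool" where
  "is_cycle N xs \<longleftrightarrow> length xs \<ge> 2 \<and> distinct xs \<and> (\<forall>x\<in>set xs. x < N)"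

definition CEWEC :: "nat \<Rightarrow> (nat \<Rightarrow> real^'k) \<Rightarrow> (nat \<Rightarrow> real^'k) \<Rightarrow> bool" where
  "CEWEC N P Q \<longleftrightarrow>
     (\<forall>xs. is_cycle N xs \<longrightarrow>
        (\<forall>i<length xs. edge_weight P Q (xs!i) (xs!((i+1) mod length xs)) \<le> 1) \<longrightarrow>
        (\<forall>i<length xs. edge_weight P Q (xs!i) (xs!((i+1) mod length xs)) = 1))"

text \<open>RP-walk: nonempty vertex list (k >= 0 edges), consecutive vertices
  distinct (edges exist only between distinct vertices), all weights <= 1.\<close>
definition RP_walk :: "nat \<Rightarrow> (nat \<Rightarrow> real^'k) \<Rightarrow> (nat \<Rightarrow> real^'k) \<Rightarrow> nat list \<Rightarrow> bool" where
  "RP_walk N P Q xs \<longleftrightarrow> xs \<noteq> [] \<and> (\<forall>x\<in>set xs. x < N) \<and>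
     (\<forall>i. i + 1 < length xs \<longrightarrow> xs!i \<noteq> xs!(i+1) \<and> edge_weight P Q (xs!i) (xs!(i+1)) \<le> 1)"

definition RP_rel :: "nat \<Rightarrow> (nat \<Rightarrow> real^'k) \<Rightarrow> (nat \<Rightarrow> real^'k) \<Rightarrow> nat \<Rightarrow> nat \<Rightarrow> bool" where
  "RP_rel N P Q u v \<longleftrightarrow> (\<exists>xs. RP_walk N P Q xs \<and> hd xs = u \<and> last xs = v)"

definition VRP :: "nat \<Rightarrow> (nat \<Rightarrow> real^'k) \<Rightarrow> (nat \<Rightarrow> real^'k) \<Rightarrow> nat \<Rightarrow> nat set" where
  "VRP N P Q v = {l. l < N \<and> RP_rel N P Q l v}"

definition VRW :: "nat \<Rightarrow> (nat \<Rightarrow> real^'k) \<Rightarrow> (nat \<Rightarrow> real^'k) \<Rightarrow> nat \<Rightarrow> nat set" where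
  "VRW N P Q v = {l. l < N \<and> RP_rel N P Q v l}"

definition M_minus :: "nat \<Rightarrow> (nat \<Rightarrow> real^'k) \<Rightarrow> (nat \<Rightarrow> real^'k) \<Rightarrow> real^'k \<Rightarrow> nat \<Rightarrow> real" where
  "M_minus N P Q p v = Inf {p \<bullet> q | q. (\<forall>i. q $ i \<ge> 0) \<and>
        (\<forall>l\<in>VRW N P Q v. P l \<bullet> q \<ge> P l \<bullet> Q l)}"

definition M_plus :: "nat \<Rightarrow> (nat \<Rightarrow> real^'k) \<Rightarrow> (nat \<Rightarrow> real^'k) \<Rightarrow> real^'k \<Rightarrow> nat \<Rightarrow> real" where
  "M_plus N P Q p v = Min ((\<lambda>l. p \<bullet> Q l) ` VRP N P Q v)"

end

theory Submission
  imports Defs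
begin

theorem fact1:
  fixes P Q P' Q' :: "nat \<Rightarrow> real^'k" and N N' :: nat and p :: "real^'k" and v :: nat
  assumes "\<forall>n<N. \<forall>i. P n $ i > 0 \<and> Q n $ i \<ge> 0"
    and "N < N'"
    and "\<forall>n<N. P' n = P n \<and> Q' n = Q n"
    and "\<forall>n<N'. \<forall>i. P' n $ i > 0 \<and> Q' n $ i \<ge> 0"
    and "CEWEC N P Q"
    and "CEWEC N' P' Q'"
    and "\<forall>i. p $ i > 0"
    and "v < N"
  shows "M_minus N' P' Q' p v \<ge> M_minus N P Q p v \<and> M_plus N' P' Q' p v \<le> M_plus N P Q p v"
proof -
  have walk: "RP_walk N' P' Q' xs" if "RP_walk N P Q xs" for xs
  proof -
    have ew: "edge_weight P' Q' m n = edge_weight P Q m n" if "m < N" "n < N" for m n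
      using assms(3) that by (simp add: edge_weight_def)
    show ?thesis using that assms(2) unfolding RP_walk_def
      by (smt (verit) Suc_eq_plus1 Suc_lessD ew nth_mem order.strict_trans)
  qed
  have rel: "RP_rel N' P' Q' a b" if "RP_rel N P Q a b" for a b
    using that walk unfolding RP_rel_def by blast
  have VRW_sub: "VRW N P Q v \<subseteq> VRW N' P' Q' v"
    using rel assms(2) unfolding VRW_def by auto
  have VRP_sub: "VRP N P Q v \<subseteq> VRP N' P' Q' v"
    using rel assms(2) unfolding VRP_def by auto
  have vin: "v \<in> VRP N P Q v"
    unfolding VRP_def RP_rel_def RP_walk_def using assms(8)
    by (intro CollectI conjI exI[of _ "[v]"]) auto
  have part2: "M_plus N' P' Q' p v \<le> M_plus N P Q p v"
    unfolding M_plus_def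
  proof (rule Min_antimono)
    show "(\<lambda>l. p \<bullet> Q l) ` VRP N P Q v \<subseteq> (\<lambda>l. p \<bullet> Q' l) ` VRP N' P' Q' v"
    proof
      fix x assume "x \<in> (\<lambda>l. p \<bullet> Q l) ` VRP N P Q v"
      then obtain l where l: "l \<in> VRP N P Q v" "x = p \<bullet> Q l" by auto
      then have "Q' l = Q l" using assms(3) by (auto simp: VRP_def)
      then show "x \<in> (\<lambda>l. p \<bullet> Q' l) ` VRP N' P' Q' v" using l VRP_sub by force
    qed
    show "(\<lambda>l. p \<bullet> Q l) ` VRP N P Q v \<noteq> {}" using vin by auto
    show "finite ((\<lambda>l. p \<bullet> Q' l) ` VRP N' P' Q' v)" by (auto simp: VRP_def)
  qed
  define B where "B = {p \<bullet> q | q. (\<forall>i. q $ i \<ge> 0) \<and> (\<forall>l\<in>VRW N P Q v. P l \<bullet> q \<ge> P l \<bullet> Q l)}"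
  define A where "A = {p \<bullet> q | q. (\<forall>i. q $ i \<ge> 0) \<and> (\<forall>l\<in>VRW N' P' Q' v. P' l \<bullet> q \<ge> P' l \<bullet> Q' l)}"
  have PQ: "P' l = P l \<and> Q' l = Q l" if "l \<in> VRW N P Q v" for l
    using that assms(3) unfolding VRW_def by auto
  have AB: "A \<subseteq> B"
    unfolding A_def B_def using VRW_sub PQ by fastforce
  have bdd: "bdd_below B"
  proof (rule bdd_belowI[of _ 0])
    fix x assume "x \<in> B"
    then obtain q where "x = p \<bullet> q" "\<forall>i. q $ i \<ge> 0" unfolding B_def by auto
    then show "0 \<le> x" using assms(7)
      by (simp add: inner_vec_def sum_nonneg less_imp_le)
  qed
  define q0 where "q0 = (\<Sum>m<N'. Q' m)"
  have q0nn: "\<forall>i. q0 $ i \<ge> 0"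
    using assms(4) by (auto simp: q0_def intro!: sum_nonneg)
  have q0c: "P' l \<bullet> q0 \<ge> P' l \<bullet> Q' l" if "l < N'" for l
  proof -
    have nn: "P' l \<bullet> Q' m \<ge> 0" if "m < N'" for m
      using assms(4) that \<open>l < N'\<close>
      by (simp add: inner_vec_def sum_nonneg less_imp_le)
    have "P' l \<bullet> q0 = (\<Sum>m<N'. P' l \<bullet> Q' m)"
      by (simp add: q0_def inner_sum_right)
    also have "\<dots> \<ge> P' l \<bullet> Q' l"
      by (rule member_le_sum) (use nn that in auto)
    finally show ?thesis .
  qed
  have "p \<bullet> q0 \<in> A"
    unfolding A_def using q0nn q0c by (auto simp: VRW_def)
  then have "A \<noteq> {}" by auto
  then have "Inf B \<le> Inf A" using cInf_superset_mono bdd AB by blast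
  then show ?thesis using part2 unfolding M_minus_def A_def B_def by simp
qed

end
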